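(* Let $\{K_1,\ldots,K_n\}$ be a strictly totally positive structure on $\mathbb{R}^n$. Then for every $j=2,\ldots,n$ the intersection $\operatorname{int}(K_j)\cap\barwedge^j\mathbb{R}^n$ contains a nonzero element.
   Context: A proper cone is a closed convex cone that is pointed and solid. $\wedge^j\mathbb{R}^n$ is the $j$th exterior power of $\mathbb{R}^n$; $\barwedge^j\mathbb{R}^n$ (the Grassmann cone) is the set of simple $j$-vectors, i.e. elements of the form $x_1\wedge\cdots\wedge x_j$ with $x_1,\ldots,x_j\in\mathbb{R}^n$. $\wedge^jA$ is the operator with $(\wedge^jA)(x_1\wedge\cdots\wedge x_j)=Ax_1\wedge\cdots\wedge Ax_j$. A totally positive structure is a family $\{K_1,\ldots,K_n\}$ with $K_j\subset\wedge^j\mathbb{R}^n$ a proper cone; a linear operator $A$ on $\mathbb{R}^n$ is GSTP with respect to it if $\wedge^jA(K_j\setminus\{0\})\subseteq\operatorname{int}(K_j)$ for all $j=1,\ldots,n$. The structure is strictly totally positive if there exists at least one operator that is GSTP with respect to it. *)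

theory Defs
  imports "HOL-Analysis.Analysis"
begin

text \<open>Model: R^n is real^'n for a finite linearly ordered index type 'n (n = CARD('n)).
  The j-th exterior power is realised in coordinates with respect to the standard basis
  e_I (I a j-subset of 'n, wedge taken in increasing order) as the subspace
  ext_space j of real^('n set) of vectors supported on the j-subsets.\<close>

definition ext_space :: "nat \<Rightarrow> (real^('n::{finite,linorder} set)) set" where
  "ext_space j = {w. \<forall>I. card I \<noteq> j \<longrightarrow> w $ I = 0}"

definition detj :: "nat \<Rightarrow> (nat \<Rightarrow> nat \<Rightarrow> real) \<Rightarrow> real" where
  "detj j M = (\<Sum>p | p permutes {..<j}. of_int (sign p) * (\<Prod>k<j. M (p k) k))"

definition wedge :: "nat \<Rightarrow> (nat \<Rightarrow> real^('n::{finite,linorder})) \<Rightarrow> real^('n set)" where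
  "wedge j x = (\<chi> I. if card I = j
      then detj j (\<lambda>r k. x k $ (sorted_list_of_set I ! r)) else 0)"

definition simple_vecs :: "nat \<Rightarrow> (real^('n::{finite,linorder} set)) set" where
  "simple_vecs j = {wedge j x | x. True}"

text \<open>The j-th exterior power of A (the j-th compound matrix acting on coordinates):
  (ext_op j A) (x_0 wedge ... wedge x_(j-1)) = A x_0 wedge ... wedge A x_(j-1).\<close>
definition ext_op :: "nat \<Rightarrow> (real^('n::{finite,linorder}))^('n::{finite,linorder}) \<Rightarrow> real^('n::{finite,linorder} set) \<Rightarrow> real^('n::{finite,linorder} set)" where
  "ext_op j A w = (\<chi> I. if card I = j then
      (\<Sum>J | card J = j. detj j (\<lambda>r s. A $ (sorted_list_of_set I ! r) $ (sorted_list_of_set J ! s)) * w $ J)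
      else 0)"

definition ext_interior :: "nat \<Rightarrow> (real^('n::{finite,linorder} set)) set \<Rightarrow> (real^('n set)) set" where
  "ext_interior j K = (top_of_set (ext_space j)) interior_of K"

definition proper_cone :: "nat \<Rightarrow> (real^('n::{finite,linorder} set)) set \<Rightarrow> bool" where
  "proper_cone j K \<longleftrightarrow> K \<subseteq> ext_space j \<and> convex K \<and> cone K \<and> closed K
     \<and> K \<inter> uminus ` K = {0} \<and> ext_interior j K \<noteq> {}"

definition TP_structure :: "(nat \<Rightarrow> (real^('n::{finite,linorder} set)) set) \<Rightarrow> bool" where
  "TP_structure K \<longleftrightarrow> (\<forall>j\<in>{1..CARD('n)}. proper_cone j (K j))"

definition GSTP :: "(nat \<Rightarrow> (real^('n::{finite,linorder} set)) set) \<Rightarrow> (real^('n::{finite,linorder}))^('n::{finite,linorder}) \<Rightarrow> bool" where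
  "GSTP K A \<longleftrightarrow> (\<forall>j\<in>{1..CARD('n)}. ext_op j A ` (K j - {0}) \<subseteq> ext_interior j (K j))"

definition STP_structure :: "(nat \<Rightarrow> (real^('n::{finite,linorder} set)) set) \<Rightarrow> bool" where
  "STP_structure K \<longleftrightarrow> TP_structure K \<and> (\<exists>A. GSTP K A)"

end

theory Submission
  imports Defs
begin


lemma detj_cong:
  assumes "\<And>r k. r < j \<Longrightarrow> k < j \<Longrightarrow> M r k = M' r k"
  shows "detj j M = detj j M'"
  unfolding detj_def
proof (rule sum.cong[OF refl])
  fix p assume "p \<in> {p. p permutes {..<j}}"
  then have p: "p permutes {..<j}" by simp
  show "of_int (sign p) * (\<Prod>k<j. M (p k) k) = of_int (sign p) * (\<Prod>k<j. M' (p k) k)"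
    using assms permutes_in_image[OF p] by (intro arg_cong2[where f="(*)"] refl prod.cong) auto
qed

lemma detj_col_perm:
  assumes s: "s permutes {..<j}"
  shows "detj j (\<lambda>r k. M r (s k)) = of_int (sign s) * detj j M"
proof -
  let ?U = "{..<j}"
  have fin: "finite ?U" by simp
  have "detj j (\<lambda>r k. M r (s k)) = (\<Sum>p\<in>{p. p permutes ?U}. of_int (sign p) * (\<Prod>k<j. M (p k) (s k)))"
    unfolding detj_def by simp
  also have "\<dots> = (\<Sum>p\<in>{p. p permutes ?U}. of_int (sign (p \<circ> s)) * (\<Prod>k<j. M ((p \<circ> s) k) (s k)))"
    by (rule sum_permutations_compose_right[OF s])
  also have "\<dots> = (\<Sum>p\<in>{p. p permutes ?U}. of_int (sign s) * (of_int (sign p) * (\<Prod>k<j. M (p k) k)))"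
  proof (rule sum.cong[OF refl])
    fix p assume "p \<in> {p. p permutes ?U}"
    then have p: "p permutes ?U" by simp
    have "(\<Prod>k<j. M ((p \<circ> s) k) (s k)) = (\<Prod>k\<in>?U. (\<lambda>k. M (p k) k) (s k))" by simp
    also have "\<dots> = (\<Prod>k<j. M (p k) k)"
      using prod.permute[OF s, of "\<lambda>k. M (p k) k"] by (simp add: o_def)
    finally have e: "(\<Prod>k<j. M ((p \<circ> s) k) (s k)) = (\<Prod>k<j. M (p k) k)" .
    have "sign (p \<circ> s) = sign p * sign s"
      using sign_compose permutes_imp_permutation[OF fin p] permutes_imp_permutation[OF fin s] by blast
    then show "of_int (sign (p \<circ> s)) * (\<Prod>k<j. M ((p \<circ> s) k) (s k)) =
        of_int (sign s) * (of_int (sign p) * (\<Prod>k<j. M (p k) k))" unfolding e by simp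
  qed
  also have "\<dots> = of_int (sign s) * detj j M"
    unfolding detj_def by (simp add: sum_distrib_left)
  finally show ?thesis .
qed

lemma detj_dup:
  assumes ab: "a < j" "b < j" "a \<noteq> b" and eq: "\<And>r. M r a = M r b"
  shows "detj j M = 0"
proof -
  let ?t = "Transposition.transpose a b"
  have t: "?t permutes {..<j}" using ab by (intro permutes_swap_id) auto
  have "detj j (\<lambda>r k. M r (?t k)) = detj j M"
    by (rule detj_cong) (simp add: Transposition.transpose_def eq)
  moreover have "detj j (\<lambda>r k. M r (?t k)) = - detj j M"
    using detj_col_perm[OF t, of M] ab by (simp add: sign_swap_id)
  ultimately show ?thesis by simp
qed

lemma detj_neg0:
  assumes j: "0 < j"
  shows "detj j (\<lambda>r k. if k = 0 then - M r k else M r k) = - detj j M"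
proof -
  have "(\<Prod>k<j. (if k = 0 then - M (p k) k else M (p k) k)) = - (\<Prod>k<j. M (p k) k)" for p
  proof -
    have z: "0 \<in> {..<j}" using j by simp
    have "(\<Prod>k<j. (if k = 0 then - M (p k) k else M (p k) k))
        = (- M (p 0) 0) * (\<Prod>k\<in>{..<j}-{0}. (if k = 0 then - M (p k) k else M (p k) k))"
      using prod.remove[OF _ z, of "\<lambda>k. if k = 0 then - M (p k) k else M (p k) k"] by simp
    also have "(\<Prod>k\<in>{..<j}-{0}. (if k = 0 then - M (p k) k else M (p k) k)) = (\<Prod>k\<in>{..<j}-{0}. M (p k) k)"
      by (rule prod.cong) auto
    also have "(- M (p 0) 0) * (\<Prod>k\<in>{..<j}-{0}. M (p k) k) = - (\<Prod>k<j. M (p k) k)"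
      using prod.remove[OF _ z, of "\<lambda>k. M (p k) k"] by simp
    finally show ?thesis .
  qed
  then show ?thesis unfolding detj_def by (simp add: sum_negf)
qed

lemma detj_id: "detj j (\<lambda>r k. if r = k then 1 else 0) = 1"
proof -
  have "detj j (\<lambda>r k. if r = k then 1 else 0) = (\<Sum>p\<in>{p. p permutes {..<j}}. if p = id then 1 else (0::real))"
    unfolding detj_def
  proof (rule sum.cong[OF refl])
    fix p assume "p \<in> {p. p permutes {..<j}}"
    then have p: "p permutes {..<j}" by simp
    show "of_int (sign p) * (\<Prod>k<j. if p k = k then 1 else 0) = (if p = id then 1 else (0::real))"
    proof (cases "p = id")
      case True then show ?thesis by (simp add: sign_id)
    next
      case False
      then obtain k where k: "p k \<noteq> k" by (metis eq_id_iff)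
      then have "k < j" using p by (meson lessThan_iff permutes_not_in)
      then have z: "(\<Prod>k<j. if p k = k then 1 else (0::real)) = 0"
        using k by (intro prod_zero) auto
      show ?thesis using False by (simp only: z) simp
    qed
  qed
  also have "\<dots> = 1"
  proof -
    have "id \<in> {p. p permutes {..<j}}" using permutes_id[of "{..<j}"] by simp
    moreover have "finite {p. p permutes {..<j}}" by (simp add: finite_permutations)
    ultimately show ?thesis by (simp add: sum.delta'[of _ id "\<lambda>_. 1::real", simplified])
  qed
  finally show ?thesis .
qed

lemma detj_zero_col:
  assumes k: "k < j" and z: "\<And>r. r < j \<Longrightarrow> M r k = 0"
  shows "detj j M = 0"
  unfolding detj_def
proof (intro sum.neutral ballI)
  fix p assume "p \<in> {p. p permutes {..<j}}"
  then have p: "p permutes {..<j}" by simp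
  have "p k < j" using permutes_in_image[OF p] k by simp
  then have "(\<Prod>k<j. M (p k) k) = 0" using k z by (intro prod_zero bexI[of _ k]) auto
  then show "of_int (sign p) * (\<Prod>k<j. M (p k) k) = 0" by simp
qed


lemma cb_expand:
  fixes B :: "nat \<Rightarrow> 'n::finite \<Rightarrow> real" and X :: "'n \<Rightarrow> nat \<Rightarrow> real"
  shows "detj j (\<lambda>r k. \<Sum>i\<in>UNIV. B r i * X i k)
    = (\<Sum>f\<in>PiE {..<j} (\<lambda>_. UNIV). (\<Prod>k<j. X (f k) k) * detj j (\<lambda>r k. B r (f k)))"
proof -
  let ?P = "PiE {..<j} (\<lambda>_. UNIV::'n set)"
  let ?Q = "{p. p permutes {..<j}}"
  have "detj j (\<lambda>r k. \<Sum>i\<in>UNIV. B r i * X i k)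
      = (\<Sum>p\<in>?Q. of_int (sign p) * (\<Prod>k<j. \<Sum>i\<in>UNIV. B (p k) i * X i k))"
    unfolding detj_def by simp
  also have "\<dots> = (\<Sum>p\<in>?Q. of_int (sign p) * (\<Sum>f\<in>?P. \<Prod>k<j. B (p k) (f k) * X (f k) k))"
    by (simp add: prod_sum_PiE)
  also have "\<dots> = (\<Sum>p\<in>?Q. \<Sum>f\<in>?P. (\<Prod>k<j. X (f k) k) * (of_int (sign p) * (\<Prod>k<j. B (p k) (f k))))"
    by (simp add: sum_distrib_left prod.distrib ac_simps)
  also have "\<dots> = (\<Sum>f\<in>?P. \<Sum>p\<in>?Q. (\<Prod>k<j. X (f k) k) * (of_int (sign p) * (\<Prod>k<j. B (p k) (f k))))"
    by (rule sum.swap)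
  also have "\<dots> = (\<Sum>f\<in>?P. (\<Prod>k<j. X (f k) k) * detj j (\<lambda>r k. B r (f k)))"
    unfolding detj_def by (simp add: sum_distrib_left)
  finally show ?thesis .
qed

lemma sorted_facts:
  fixes J :: "'n::{finite,linorder} set"
  assumes "card J = j"
  shows "length (sorted_list_of_set J) = j" "distinct (sorted_list_of_set J)"
    "set (sorted_list_of_set J) = J"
  using assms by auto

lemma sorted_facts2:
  fixes J :: "'n::{finite,linorder} set"
  assumes "card J = j"
  shows "inj_on ((!) (sorted_list_of_set J)) {..<j}" "(!) (sorted_list_of_set J) ` {..<j} = J"
proof -
  note sf = sorted_facts[OF assms]
  show "inj_on ((!) (sorted_list_of_set J)) {..<j}" using sf by (intro inj_on_nth) auto
  have "(!) (sorted_list_of_set J) ` {..<j} = set (sorted_list_of_set J)"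
    using sf(1) by (auto simp: set_conv_nth)
  then show "(!) (sorted_list_of_set J) ` {..<j} = J" using sf(3) by simp
qed

lemma cauchy_binet:
  fixes B :: "nat \<Rightarrow> 'n::{finite,linorder} \<Rightarrow> real" and X :: "'n \<Rightarrow> nat \<Rightarrow> real"
  shows "detj j (\<lambda>r k. \<Sum>i\<in>UNIV. B r i * X i k)
    = (\<Sum>J | card J = j. detj j (\<lambda>r s. B r (sorted_list_of_set J ! s))
          * detj j (\<lambda>r k. X (sorted_list_of_set J ! r) k))"
proof -
  let ?P = "PiE {..<j} (\<lambda>_. UNIV::'n set)"
  let ?Pi = "{f\<in>?P. inj_on f {..<j}}"
  let ?Q = "{p. p permutes {..<j}}"
  let ?C = "{J::'n set. card J = j}"
  let ?s = "\<lambda>J::'n set. sorted_list_of_set J"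
  define G where "G f = (\<Prod>k<j. X (f k) k) * detj j (\<lambda>r k. B r (f k))" for f
  have "detj j (\<lambda>r k. \<Sum>i\<in>UNIV. B r i * X i k) = (\<Sum>f\<in>?P. G f)"
    unfolding G_def by (rule cb_expand)
  also have "\<dots> = (\<Sum>f\<in>?Pi. G f)"
  proof (rule sum.mono_neutral_right)
    show "finite ?P" by (simp add: finite_PiE)
    show "?Pi \<subseteq> ?P" by blast
    show "\<forall>f\<in>?P - ?Pi. G f = 0"
    proof
      fix f assume "f \<in> ?P - ?Pi"
      then have "\<not> inj_on f {..<j}" by blast
      then obtain a b where ab: "a < j" "b < j" "a \<noteq> b" "f a = f b"
        unfolding inj_on_def by auto
      have "detj j (\<lambda>r k. B r (f k)) = 0" by (rule detj_dup[OF ab(1-3)]) (simp add: ab(4))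
      then show "G f = 0" unfolding G_def by simp
    qed
  qed
  finally have P1: "detj j (\<lambda>r k. \<Sum>i\<in>UNIV. B r i * X i k) = (\<Sum>f\<in>?Pi. G f)" .
  define bld where "bld = (\<lambda>(J::'n set, s::nat\<Rightarrow>nat). \<lambda>k. if k < j then ?s J ! (s k) else undefined)"
  define inv where "inv = (\<lambda>f::nat\<Rightarrow>'n. (f ` {..<j}, \<lambda>k. if k < j then the_inv_into {..<j} ((!) (?s (f ` {..<j}))) (f k) else k))"
  have W3: "inv (bld a) = a" and W4: "bld a \<in> ?Pi" if a: "a \<in> Sigma ?C (\<lambda>_. ?Q)" for a
  proof -
    obtain J s where Js: "a = (J, s)" by (cases a)
    have J: "card J = j" and s: "s permutes {..<j}" using a Js by auto
    note sf = sorted_facts[OF J]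
    have sin: "k < j \<Longrightarrow> s k < j" for k using permutes_in_image[OF s] by simp
    let ?f = "\<lambda>k. if k < j then ?s J ! (s k) else undefined"
    have bf: "bld a = ?f" unfolding bld_def Js by simp
    have img: "?f ` {..<j} = J"
    proof -
      have "?f ` {..<j} = (\<lambda>k. ?s J ! k) ` (s ` {..<j})" by (auto simp: image_iff)
      also have "s ` {..<j} = {..<j}" by (rule permutes_image[OF s])
      also have "(\<lambda>k. ?s J ! k) ` {..<j} = set (?s J)" using sf(1) by (auto simp: set_conv_nth)
      finally show ?thesis using sf(3) by simp
    qed
    note sf2 = sorted_facts2[OF J]
    have "(\<lambda>k. if k < j then the_inv_into {..<j} ((!) (?s J)) (?f k) else k) = s"
    proof
      fix k show "(if k < j then the_inv_into {..<j} ((!) (?s J)) (?f k) else k) = s k"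
      proof (cases "k < j")
        case True
        then show ?thesis using sin the_inv_into_f_f[OF sf2(1), of "s k"] by simp
      next
        case False
        then show ?thesis using permutes_not_in[OF s] by simp
      qed
    qed
    then show "inv (bld a) = a" unfolding bf inv_def img using Js by simp
    have "inj_on ?f {..<j}"
    proof (rule inj_onI)
      fix x y assume xy: "x \<in> {..<j}" "y \<in> {..<j}" "?f x = ?f y"
      then have "?s J ! (s x) = ?s J ! (s y)" by simp
      then have "s x = s y" using sf sin xy by (simp add: nth_eq_iff_index_eq)
      then show "x = y" using permutes_inj[OF s] by (simp add: inj_eq)
    qed
    then show "bld a \<in> ?Pi" unfolding bf by (auto simp: PiE_def extensional_def)
  qed
  have W1: "bld (inv f) = f" and W2: "inv f \<in> Sigma ?C (\<lambda>_. ?Q)" if f: "f \<in> ?Pi" for f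
  proof -
    let ?J = "f ` {..<j}"
    have inj: "inj_on f {..<j}" using f by blast
    have J: "card ?J = j" using card_image[OF inj] by simp
    note sf = sorted_facts[OF J]
    note sf2 = sorted_facts2[OF J]
    let ?t = "\<lambda>k. if k < j then the_inv_into {..<j} ((!) (?s ?J)) (f k) else k"
    have t: "?t permutes {..<j}"
    proof (rule inj_imp_permutes)
      show "inj_on ?t {..<j}"
      proof (rule inj_onI)
        fix x y assume xy: "x \<in> {..<j}" "y \<in> {..<j}" "?t x = ?t y"
        then have e: "the_inv_into {..<j} ((!) (?s ?J)) (f x) = the_inv_into {..<j} ((!) (?s ?J)) (f y)" by simp
        have "f x \<in> (!) (?s ?J) ` {..<j}" "f y \<in> (!) (?s ?J) ` {..<j}" using xy sf2(2) by auto
        then have "f x = f y" using e f_the_inv_into_f[OF sf2(1)] by metis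
        then show "x = y" using inj xy by (simp add: inj_on_def)
      qed
      show "finite {..<j}" by simp
      show "?t x \<in> {..<j}" if "x \<in> {..<j}" for x
      proof -
        have "f x \<in> (!) (?s ?J) ` {..<j}" using that sf2(2) by auto
        then show ?thesis using that the_inv_into_into[OF sf2(1), of "f x" "{..<j}"] by simp
      qed
      show "?t i = i" if "i \<notin> {..<j}" for i using that by simp
    qed
    show "inv f \<in> Sigma ?C (\<lambda>_. ?Q)" unfolding inv_def using J t by simp
    show "bld (inv f) = f"
    proof
      fix k show "bld (inv f) k = f k"
      proof (cases "k < j")
        case True
        then have "f k \<in> (!) (?s ?J) ` {..<j}" using sf2(2) by auto
        then show ?thesis using True f_the_inv_into_f[OF sf2(1)] unfolding bld_def inv_def by simp
      next
        case False
        then show ?thesis using f unfolding bld_def inv_def by (auto simp: PiE_def extensional_def)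
      qed
    qed
  qed
  have "(\<Sum>f\<in>?Pi. G f) = (\<Sum>x\<in>Sigma ?C (\<lambda>_. ?Q). G (bld x))"
    apply (rule sum.reindex_bij_witness[where i = bld and j = inv])
        apply (erule W1)
       apply (erule W2)
      apply (erule W3)
     apply (erule W4)
    apply (simp only: W1)
    done
  also have "\<dots> = (\<Sum>(J,s)\<in>Sigma ?C (\<lambda>_. ?Q). G (bld (J,s)))"
    by (simp add: case_prod_beta')
  also have "\<dots> = (\<Sum>J\<in>?C. \<Sum>s\<in>?Q. G (bld (J,s)))"
    by (rule sum.Sigma[symmetric]) (auto simp: finite_permutations)
  finally have P2: "(\<Sum>f\<in>?Pi. G f) = (\<Sum>J\<in>?C. \<Sum>s\<in>?Q. G (\<lambda>k. if k < j then ?s J ! (s k) else undefined))"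
    unfolding bld_def by simp
  have P3: "(\<Sum>J\<in>?C. \<Sum>s\<in>?Q. G (\<lambda>k. if k < j then ?s J ! (s k) else undefined)) = (\<Sum>J\<in>?C. detj j (\<lambda>r s. B r (?s J ! s)) * detj j (\<lambda>r k. X (?s J ! r) k))"
  proof (rule sum.cong[OF refl])
    fix J assume "J \<in> ?C"
    have "G (\<lambda>k. if k < j then ?s J ! (s k) else undefined)
        = detj j (\<lambda>r s. B r (?s J ! s)) * (of_int (sign s) * (\<Prod>k<j. X (?s J ! (s k)) k))"
      if s: "s \<in> ?Q" for s
    proof -
      have s': "s permutes {..<j}" using s by simp
      have "(\<Prod>k<j. X ((\<lambda>k. if k < j then ?s J ! (s k) else undefined) k) k) = (\<Prod>k<j. X (?s J ! (s k)) k)"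
        by (rule prod.cong) auto
      moreover have "detj j (\<lambda>r k. B r ((\<lambda>k. if k < j then ?s J ! (s k) else undefined) k))
          = detj j (\<lambda>r k. B r (?s J ! (s k)))"
        by (rule detj_cong) simp
      moreover have "detj j (\<lambda>r k. B r (?s J ! (s k))) = of_int (sign s) * detj j (\<lambda>r s. B r (?s J ! s))"
        using detj_col_perm[OF s', of "\<lambda>r k. B r (?s J ! k)"] by simp
      ultimately show ?thesis unfolding G_def by (simp add: ac_simps)
    qed
    then have "(\<Sum>s\<in>?Q. G (\<lambda>k. if k < j then ?s J ! (s k) else undefined))
        = (\<Sum>s\<in>?Q. detj j (\<lambda>r s. B r (?s J ! s)) * (of_int (sign s) * (\<Prod>k<j. X (?s J ! (s k)) k)))"
      by (rule sum.cong[OF refl])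
    also have "\<dots> = detj j (\<lambda>r s. B r (?s J ! s)) * detj j (\<lambda>r k. X (?s J ! r) k)"
      unfolding detj_def[of j "\<lambda>r k. X (?s J ! r) k"] by (simp add: sum_distrib_left)
    finally show "(\<Sum>s\<in>?Q. G (\<lambda>k. if k < j then ?s J ! (s k) else undefined))
        = detj j (\<lambda>r s. B r (?s J ! s)) * detj j (\<lambda>r k. X (?s J ! r) k)" .
  qed
  show ?thesis using P1 P2 P3 by simp
qed



locale pcone =
  fixes E :: "'v::euclidean_space set" and K :: "'v set" and T :: "'v \<Rightarrow> 'v"
  assumes sub: "subspace E" and KE: "K \<subseteq> E" and cvx: "convex K" and cn: "cone K"
    and cl: "closed K" and pt: "K \<inter> uminus ` K = {0}" and ne: "\<exists>v\<in>E. v \<noteq> 0"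
    and lin: "linear T" and pos: "\<forall>x\<in>K-{0}. T x \<in> top_of_set E interior_of K"
    and Kine: "top_of_set E interior_of K \<noteq> {}"
begin

abbreviation "Ki \<equiv> top_of_set E interior_of K"

lemma Ki_iff: "z \<in> Ki \<longleftrightarrow> z \<in> E \<and> (\<exists>e>0. \<forall>y\<in>E. dist y z < e \<longrightarrow> y \<in> K)"
proof
  assume "z \<in> Ki"
  then obtain U where U: "openin (top_of_set E) U" "z \<in> U" "U \<subseteq> K"
    unfolding interior_of_def by auto
  then show "z \<in> E \<and> (\<exists>e>0. \<forall>y\<in>E. dist y z < e \<longrightarrow> y \<in> K)"
    unfolding openin_euclidean_subtopology_iff by blast
next
  assume "z \<in> E \<and> (\<exists>e>0. \<forall>y\<in>E. dist y z < e \<longrightarrow> y \<in> K)"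
  then obtain e where e: "z \<in> E" "e > 0" "\<forall>y\<in>E. dist y z < e \<longrightarrow> y \<in> K" by blast
  have "openin (top_of_set E) (E \<inter> ball z e)" by (simp add: openin_open_Int)
  moreover have "z \<in> E \<inter> ball z e" using e by auto
  moreover have "E \<inter> ball z e \<subseteq> K" using e by (auto simp: dist_commute)
  ultimately show "z \<in> Ki" unfolding interior_of_def by blast
qed

lemma Ki_K: "z \<in> Ki \<Longrightarrow> z \<in> K"
  using Ki_iff by force

lemma Ki_E: "z \<in> Ki \<Longrightarrow> z \<in> E"
  using Ki_iff by force

lemma zero_K: "0 \<in> K" using pt by auto

lemma K_scale: "0 \<le> c \<Longrightarrow> x \<in> K \<Longrightarrow> c *\<^sub>R x \<in> K"
  using cn unfolding cone_def by auto

lemma K_add: assumes "x \<in> K" "y \<in> K" shows "x + y \<in> K"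
proof -
  have "(1/2) *\<^sub>R x + (1/2) *\<^sub>R y \<in> K"
    using cvx assms unfolding convex_def by (smt (verit) field_sum_of_halves)
  from K_scale[OF _ this, of 2] show ?thesis by (simp add: scaleR_add_right)
qed

lemma K_sum: "finite S \<Longrightarrow> (\<forall>v\<in>S. f v \<in> K) \<Longrightarrow> sum f S \<in> K"
  by (induction S rule: finite_induct) (auto simp: zero_K K_add)

lemma K_pointed: "x \<in> K \<Longrightarrow> -x \<in> K \<Longrightarrow> x = 0"
proof -
  assume "x \<in> K" "-x \<in> K"
  then have "x \<in> uminus ` K" by (metis image_eqI minus_minus)
  with \<open>x \<in> K\<close> pt show "x = 0" by auto
qed

lemma Ki_scale: assumes "c > 0" "z \<in> Ki" shows "c *\<^sub>R z \<in> Ki"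
proof -
  obtain e where e: "z \<in> E" "e > 0" "\<forall>y\<in>E. dist y z < e \<longrightarrow> y \<in> K" using assms Ki_iff by blast
  have "\<forall>y\<in>E. dist y (c *\<^sub>R z) < c * e \<longrightarrow> y \<in> K"
  proof (intro ballI impI)
    fix y assume y: "y \<in> E" "dist y (c *\<^sub>R z) < c * e"
    have "(1/c) *\<^sub>R y \<in> E" using y sub by (simp add: subspace_scale)
    moreover have "dist ((1/c) *\<^sub>R y) z < e"
    proof -
      have "(1/c) *\<^sub>R y - z = (1/c) *\<^sub>R (y - c *\<^sub>R z)"
        using assms(1) by (simp add: scaleR_diff_right)
      then have "dist ((1/c) *\<^sub>R y) z = (1/c) * dist y (c *\<^sub>R z)"
        using assms(1) unfolding dist_norm by simp
      also have "\<dots> < (1/c) * (c * e)" using y assms by (simp add: pos_divide_less_eq mult.commute)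
      finally show ?thesis using assms by simp
    qed
    ultimately have "(1/c) *\<^sub>R y \<in> K" using e by blast
    from K_scale[OF _ this, of c] show "y \<in> K" using assms by simp
  qed
  moreover have "c *\<^sub>R z \<in> E" using e sub by (simp add: subspace_scale)
  ultimately show ?thesis using Ki_iff assms e by (meson mult_pos_pos)
qed

lemma Ki_add: assumes "z \<in> Ki" "k \<in> K" shows "z + k \<in> Ki"
proof -
  obtain e where e: "z \<in> E" "e > 0" "\<forall>y\<in>E. dist y z < e \<longrightarrow> y \<in> K" using assms Ki_iff by blast
  have kE: "k \<in> E" using assms KE by auto
  have "\<forall>y\<in>E. dist y (z + k) < e \<longrightarrow> y \<in> K"
  proof (intro ballI impI)
    fix y assume y: "y \<in> E" "dist y (z + k) < e"
    have "y - k \<in> E" using y kE sub by (simp add: subspace_diff)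
    moreover have "dist (y - k) z < e" using y by (simp add: dist_norm algebra_simps)
    ultimately have "y - k \<in> K" using e by blast
    from K_add[OF this assms(2)] show "y \<in> K" by simp
  qed
  moreover have "z + k \<in> E" using e kE sub by (simp add: subspace_add)
  ultimately show ?thesis using Ki_iff e by blast
qed

lemma zero_notKi: "0 \<notin> Ki"
proof
  assume "0 \<in> Ki"
  then obtain e where e: "e > 0" "\<forall>y\<in>E. dist y 0 < e \<longrightarrow> y \<in> K" using Ki_iff by blast
  obtain v where v: "v \<in> E" "v \<noteq> 0" using ne by blast
  define s where "s = e / (2 * norm v)"
  have s: "s > 0" using e v by (simp add: s_def)
  have ns: "norm (s *\<^sub>R v) < e" using e v by (simp add: s_def)
  have "s *\<^sub>R v \<in> K" using e ns v sub by (simp add: subspace_scale)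
  moreover have "- (s *\<^sub>R v) \<in> K" using e ns v sub by (simp add: subspace_scale subspace_neg)
  ultimately have "s *\<^sub>R v = 0" using K_pointed by blast
  with s v show False by simp
qed


lemma phi_ex:
  obtains a :: 'v and b :: real where "b > 0" "\<forall>x\<in>K. b * norm x \<le> inner a x"
proof -
  let ?C = "K \<inter> sphere 0 1"
  have cC: "compact ?C" using cl by (simp add: closed_Int_compact)
  let ?H = "convex hull ?C"
  have cH: "compact ?H" by (rule compact_convex_hull[OF cC])
  have "0 \<notin> ?H"
  proof
    assume "0 \<in> ?H"
    then obtain S u where S: "finite S" "S \<subseteq> ?C" "\<forall>x\<in>S. 0 \<le> u x" "sum u S = 1"
        "(\<Sum>v\<in>S. u v *\<^sub>R v) = 0"
      unfolding convex_hull_explicit by blast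
    have "\<exists>c\<in>S. u c > 0"
    proof (rule ccontr)
      assume "\<not> (\<exists>c\<in>S. u c > 0)"
      then have "\<forall>x\<in>S. u x \<le> 0" by (simp add: not_less)
      then have "sum u S \<le> 0" by (simp add: sum_nonpos)
      with S(4) show False by simp
    qed
    then obtain c where c: "c \<in> S" "u c > 0" by blast
    have "\<forall>v\<in>S-{c}. u v *\<^sub>R v \<in> K"
    proof
      fix v assume "v \<in> S - {c}"
      then have "v \<in> K" "0 \<le> u v" using S(2,3) by auto
      then show "u v *\<^sub>R v \<in> K" by (simp add: K_scale)
    qed
    then have R: "(\<Sum>v\<in>S-{c}. u v *\<^sub>R v) \<in> K"
      using S(1) by (intro K_sum) auto
    have "u c *\<^sub>R c + (\<Sum>v\<in>S-{c}. u v *\<^sub>R v) = 0"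
      using sum.remove[OF S(1) c(1), of "\<lambda>v. u v *\<^sub>R v"] S(5) by simp
    then have "- (u c *\<^sub>R c) = (\<Sum>v\<in>S-{c}. u v *\<^sub>R v)"
      by (simp add: add_eq_0_iff)
    then have m: "- (u c *\<^sub>R c) \<in> K" using R by simp
    have "c \<in> K" using S(2) c(1) by auto
    then have "u c *\<^sub>R c \<in> K" using c(2) by (simp add: K_scale)
    then have "u c *\<^sub>R c = 0" using m by (rule K_pointed)
    with c have "c = 0" by simp
    moreover have "norm c = 1" using S(2) c(1) by auto
    ultimately show False by simp
  qed
  then obtain a b where ab: "a \<noteq> 0" "0 < b" "\<forall>x\<in>?H. b < inner a x"
    using separating_hyperplane_closed_0[OF convex_convex_hull compact_imp_closed[OF cH]] by blast
  have "\<forall>x\<in>K. b * norm x \<le> inner a x"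
  proof
    fix x assume x: "x \<in> K"
    show "b * norm x \<le> inner a x"
    proof (cases "x = 0")
      case True then show ?thesis by simp
    next
      case False
      have "(1 / norm x) *\<^sub>R x \<in> K" using x by (simp add: K_scale)
      moreover have "norm ((1 / norm x) *\<^sub>R x) = 1" using False by simp
      ultimately have "(1 / norm x) *\<^sub>R x \<in> ?C" by simp
      then have "(1 / norm x) *\<^sub>R x \<in> ?H" by (rule hull_inc)
      then have "b < inner a ((1 / norm x) *\<^sub>R x)" using ab by blast
      then have "b < inner a x / norm x" by simp
      then have "b * norm x < inner a x" using False by (simp add: pos_less_divide_eq)
      then show ?thesis by simp
    qed
  qed
  then show ?thesis using that ab by blast
qed

lemma Tcont: "continuous_on S T"
  using lin by (simp add: linear_continuous_on linear_conv_bounded_linear)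

lemma eigen:
  assumes b: "b > 0" "\<forall>x\<in>K. b * norm x \<le> inner a x"
  obtains u r where "u \<in> Ki" "r > 0" "T u = r *\<^sub>R u" "inner a u = 1"
proof -
  let ?S = "K \<inter> {x. inner a x = 1}"
  have posK: "x \<in> K \<Longrightarrow> x \<noteq> 0 \<Longrightarrow> inner a x > 0" for x
  proof -
    assume "x \<in> K" "x \<noteq> 0"
    then have "0 < b * norm x" using b by simp
    also have "\<dots> \<le> inner a x" using b \<open>x \<in> K\<close> by blast
    finally show ?thesis .
  qed
  obtain z where z: "z \<in> Ki" using Kine by blast
  have z0: "z \<noteq> 0" using z zero_notKi by auto
  have zK: "z \<in> K" using z Ki_K by auto
  have "(1 / inner a z) *\<^sub>R z \<in> ?S" using posK[OF zK z0] zK by (auto intro!: K_scale)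
  then have Sne: "?S \<noteq> {}" by blast
  have Sb: "?S \<subseteq> cball 0 (1/b)"
  proof
    fix x assume "x \<in> ?S"
    then have "b * norm x \<le> 1" using b by auto
    then show "x \<in> cball 0 (1/b)" using b by (simp add: pos_le_divide_eq mult.commute)
  qed
  have Sc: "compact ?S"
    using Sb cl closed_hyperplane[of a 1]
    by (meson bounded_cball bounded_subset closed_Int compact_eq_bounded_closed)
  have Scv: "convex ?S" using cvx convex_hyperplane[of a 1] by (rule convex_Int)
  have TS: "x \<in> ?S \<Longrightarrow> T x \<in> Ki" for x using pos by auto
  have TSp: "x \<in> ?S \<Longrightarrow> inner a (T x) > 0" for x
  proof -
    assume "x \<in> ?S"
    then have "T x \<in> Ki" by (rule TS)
    then have "T x \<in> K" "T x \<noteq> 0" using Ki_K zero_notKi by auto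
    then show ?thesis by (rule posK)
  qed
  define f where "f x = (1 / inner a (T x)) *\<^sub>R T x" for x
  have fc: "continuous_on ?S f"
  proof -
    have c1: "continuous_on ?S (\<lambda>x. inner a (T x))"
      by (intro continuous_on_inner continuous_on_const Tcont)
    have c2: "continuous_on ?S (\<lambda>x. 1 / inner a (T x))"
      using TSp by (intro continuous_on_divide[OF continuous_on_const c1]) force
    show ?thesis unfolding f_def by (intro continuous_on_scaleR c2 Tcont)
  qed
  have fS: "f \<in> ?S \<rightarrow> ?S"
  proof
    fix x assume x: "x \<in> ?S"
    have "f x \<in> K" unfolding f_def using TSp[OF x] TS[OF x] Ki_K by (auto intro!: K_scale)
    moreover have "inner a (f x) = 1" unfolding f_def using TSp[OF x] by simp
    ultimately show "f x \<in> ?S" by simp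
  qed
  obtain u where u: "u \<in> ?S" "f u = u" using brouwer[OF Sc Scv Sne fc fS] by blast
  define r where "r = inner a (T u)"
  have r: "r > 0" using TSp[OF u(1)] r_def by simp
  have "(1/r) *\<^sub>R T u = u" using u(2) unfolding f_def r_def by simp
  then have "r *\<^sub>R ((1/r) *\<^sub>R T u) = r *\<^sub>R u" by simp
  then have Tu: "T u = r *\<^sub>R u" using r by simp
  have "(1/r) *\<^sub>R T u \<in> Ki" using TS[OF u(1)] r by (intro Ki_scale) auto
  then have "u \<in> Ki" using Tu r by simp
  then show ?thesis using that r Tu u by auto
qed


lemma uniform:
  assumes b: "b > 0" "\<forall>x\<in>K. b * norm x \<le> inner a x"
    and u: "u \<in> Ki" "inner a u = 1"
  shows "\<exists>\<epsilon>>0. \<forall>z\<in>K. T z - (\<epsilon> * inner a z) *\<^sub>R u \<in> K"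
proof -
  let ?S = "K \<inter> {x. inner a x = 1}"
  have posK: "inner a x > 0" if "x \<in> K" "x \<noteq> 0" for x
  proof -
    have "0 < b * norm x" using b that by simp
    also have "\<dots> \<le> inner a x" using b that by blast
    finally show ?thesis .
  qed
  have uE: "u \<in> E" using u Ki_E by auto
  have uK: "u \<in> K" using u Ki_K by auto
  have u0: "u \<noteq> 0" using u by auto
  have Sb: "?S \<subseteq> cball 0 (1/b)"
  proof
    fix x assume "x \<in> ?S"
    then have "b * norm x \<le> 1" using b by auto
    then show "x \<in> cball 0 (1/b)" using b by (simp add: pos_le_divide_eq mult.commute)
  qed
  have Sc: "compact ?S"
    using Sb cl closed_hyperplane[of a 1]
    by (meson bounded_cball bounded_subset closed_Int compact_eq_bounded_closed)
  have Sne: "?S \<noteq> {}" using uK u by auto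
  have TS: "x \<in> ?S \<Longrightarrow> T x \<in> Ki" for x using pos by auto
  let ?D = "E - K"
  have mu: "- u \<in> ?D"
  proof -
    have "- u \<in> E" using uE sub by (simp add: subspace_neg)
    moreover have "- u \<notin> K" using K_pointed uK u0 by blast
    ultimately show ?thesis by simp
  qed
  then have Dne: "?D \<noteq> {}" by blast
  define g where "g x = infdist (T x) ?D" for x
  have gc: "continuous_on ?S g" unfolding g_def by (intro continuous_intros Tcont)
  have gpos: "g x > 0" if x: "x \<in> ?S" for x
  proof -
    obtain e where e: "e > 0" "\<forall>y\<in>E. dist y (T x) < e \<longrightarrow> y \<in> K"
      using TS[OF x] Ki_iff by blast
    have "e \<le> infdist (T x) ?D"
      unfolding infdist_notempty[OF Dne]
    proof (rule cINF_greatest[OF Dne])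
      fix y assume "y \<in> ?D"
      then show "e \<le> dist (T x) y" using e by (force simp: dist_commute not_less)
    qed
    then show ?thesis using e unfolding g_def by simp
  qed
  obtain x0 where x0: "x0 \<in> ?S" "\<forall>y\<in>?S. g x0 \<le> g y"
    using continuous_attains_inf[OF Sc Sne gc] by blast
  define \<delta> where "\<delta> = g x0"
  have \<delta>: "\<delta> > 0" using gpos[OF x0(1)] \<delta>_def by simp
  define \<epsilon> where "\<epsilon> = \<delta> / (2 * norm u)"
  have \<epsilon>: "\<epsilon> > 0" using \<delta> u0 by (simp add: \<epsilon>_def)
  have "\<forall>z\<in>K. T z - (\<epsilon> * inner a z) *\<^sub>R u \<in> K"
  proof
    fix z assume z: "z \<in> K"
    show "T z - (\<epsilon> * inner a z) *\<^sub>R u \<in> K"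
    proof (cases "z = 0")
      case True then show ?thesis using lin zero_K by (simp add: linear_0)
    next
      case False
      define p where "p = inner a z"
      have p: "p > 0" using posK[OF z False] p_def by simp
      define z' where "z' = (1/p) *\<^sub>R z"
      have z'S: "z' \<in> ?S" using z p unfolding z'_def p_def by (simp add: K_scale)
      define y where "y = T z' - \<epsilon> *\<^sub>R u"
      have Tz'E: "T z' \<in> E" using TS[OF z'S] Ki_E by auto
      have yE: "y \<in> E" unfolding y_def using Tz'E uE sub by (simp add: subspace_diff subspace_scale)
      have "dist (T z') y = \<epsilon> * norm u" unfolding y_def dist_norm using \<epsilon> by simp
      also have "\<dots> = \<delta> / 2" using u0 by (simp add: \<epsilon>_def)
      also have "\<dots> < g z'" using x0(2) z'S \<delta> \<delta>_def by force
      finally have dl: "dist (T z') y < infdist (T z') ?D" unfolding g_def .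
      have yK: "y \<in> K"
      proof (rule ccontr)
        assume "y \<notin> K"
        then have "y \<in> ?D" using yE by simp
        then have "infdist (T z') ?D \<le> dist (T z') y" by (rule infdist_le)
        with dl show False by simp
      qed
      have Tz: "T z = p *\<^sub>R T z'" unfolding z'_def using p lin by (simp add: linear_cmul)
      have "T z - (\<epsilon> * p) *\<^sub>R u = p *\<^sub>R y" unfolding y_def Tz by (simp add: algebra_simps)
      then show ?thesis using yK p unfolding p_def[symmetric] by (simp add: K_scale)
    qed
  qed
  then show ?thesis using \<epsilon> by blast
qed

lemma step:
  assumes eps: "\<forall>z\<in>K. T z - (\<epsilon> * inner a z) *\<^sub>R u \<in> K"
    and Tu: "T u = r *\<^sub>R u" and r: "r > 0" and au: "inner a u = 1"
    and lo: "y - a0 *\<^sub>R u \<in> K" and hi: "b0 *\<^sub>R u - y \<in> K"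
  shows "(1/r) *\<^sub>R T y - (a0 + (\<epsilon>/r) * (inner a y - a0)) *\<^sub>R u \<in> K"
    and "(b0 - (\<epsilon>/r) * (b0 - inner a y)) *\<^sub>R u - (1/r) *\<^sub>R T y \<in> K"
proof -
  have 1: "T (y - a0 *\<^sub>R u) - (\<epsilon> * inner a (y - a0 *\<^sub>R u)) *\<^sub>R u \<in> K" using eps lo by blast
  have e1: "T (y - a0 *\<^sub>R u) = T y - (a0 * r) *\<^sub>R u" using lin Tu by (simp add: linear_diff linear_cmul)
  have e2: "inner a (y - a0 *\<^sub>R u) = inner a y - a0" using au by (simp add: inner_diff_right)
  have "T y - (a0 * r) *\<^sub>R u - (\<epsilon> * (inner a y - a0)) *\<^sub>R u = T y - (a0 * r + \<epsilon> * (inner a y - a0)) *\<^sub>R u"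
    by (simp add: scaleR_add_left)
  then have "T y - (a0 * r + \<epsilon> * (inner a y - a0)) *\<^sub>R u \<in> K" using 1 unfolding e1 e2 by metis
  then have "(1/r) *\<^sub>R (T y - (a0 * r + \<epsilon> * (inner a y - a0)) *\<^sub>R u) \<in> K"
    using r by (simp add: K_scale)
  moreover have "(1/r) *\<^sub>R (T y - (a0 * r + \<epsilon> * (inner a y - a0)) *\<^sub>R u)
      = (1/r) *\<^sub>R T y - (a0 + (\<epsilon>/r) * (inner a y - a0)) *\<^sub>R u"
  proof -
    have c: "(1/r) * (a0 * r + \<epsilon> * (inner a y - a0)) = a0 + (\<epsilon>/r) * (inner a y - a0)"
      using r by (simp add: field_simps)
    show ?thesis unfolding scaleR_diff_right scaleR_scaleR c ..
  qed
  ultimately show "(1/r) *\<^sub>R T y - (a0 + (\<epsilon>/r) * (inner a y - a0)) *\<^sub>R u \<in> K" by simp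
  have 2: "T (b0 *\<^sub>R u - y) - (\<epsilon> * inner a (b0 *\<^sub>R u - y)) *\<^sub>R u \<in> K" using eps hi by blast
  have e3: "T (b0 *\<^sub>R u - y) = (b0 * r) *\<^sub>R u - T y" using lin Tu by (simp add: linear_diff linear_cmul)
  have e4: "inner a (b0 *\<^sub>R u - y) = b0 - inner a y" using au by (simp add: inner_diff_right)
  have "(b0 * r) *\<^sub>R u - T y - (\<epsilon> * (b0 - inner a y)) *\<^sub>R u = (b0 * r - \<epsilon> * (b0 - inner a y)) *\<^sub>R u - T y"
    by (simp add: scaleR_diff_left)
  then have "(b0 * r - \<epsilon> * (b0 - inner a y)) *\<^sub>R u - T y \<in> K" using 2 unfolding e3 e4 by metis
  then have "(1/r) *\<^sub>R ((b0 * r - \<epsilon> * (b0 - inner a y)) *\<^sub>R u - T y) \<in> K"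
    using r by (simp add: K_scale)
  moreover have "(1/r) *\<^sub>R ((b0 * r - \<epsilon> * (b0 - inner a y)) *\<^sub>R u - T y)
      = (b0 - (\<epsilon>/r) * (b0 - inner a y)) *\<^sub>R u - (1/r) *\<^sub>R T y"
  proof -
    have c: "(1/r) * (b0 * r - \<epsilon> * (b0 - inner a y)) = b0 - (\<epsilon>/r) * (b0 - inner a y)"
      using r by (simp add: field_simps)
    show ?thesis unfolding scaleR_diff_right scaleR_scaleR c ..
  qed
  ultimately show "(b0 - (\<epsilon>/r) * (b0 - inner a y)) *\<^sub>R u - (1/r) *\<^sub>R T y \<in> K" by simp
qed


lemma iter:
  assumes eps: "\<forall>z\<in>K. T z - (\<epsilon> * inner a z) *\<^sub>R u \<in> K" and \<epsilon>: "\<epsilon> > 0"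
    and Tu: "T u = r *\<^sub>R u" and r: "r > 0" and au: "inner a u = 1" and uK: "u \<in> Ki"
    and nn: "\<forall>x\<in>K. 0 \<le> inner a x" and y: "y \<in> E"
  shows "\<exists>w. \<forall>k. \<exists>a0 b0. ((\<lambda>x. (1/r) *\<^sub>R T x)^^k) y - a0 *\<^sub>R u \<in> K
           \<and> b0 *\<^sub>R u - ((\<lambda>x. (1/r) *\<^sub>R T x)^^k) y \<in> K
           \<and> b0 - a0 \<le> (max 0 (1 - \<epsilon>/r))^k * w"
proof -
  let ?T = "\<lambda>x. (1/r) *\<^sub>R T x"
  let ?d = "max 0 (1 - \<epsilon>/r)"
  obtain e where e: "e > 0" "\<forall>y'\<in>E. dist y' u < e \<longrightarrow> y' \<in> K" using uK Ki_iff by blast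
  have uE: "u \<in> E" using uK Ki_E by auto
  define s where "s = e / (2 * (norm y + 1))"
  have s: "s > 0" unfolding s_def using e
    by (intro divide_pos_pos) (auto intro: add_nonneg_pos)
  have sy: "s * norm y < e"
  proof -
    have "s * norm y \<le> s * (norm y + 1)" using s by simp
    also have "\<dots> = e / 2" unfolding s_def
    proof -
      have "norm y + 1 > 0" by (simp add: add_nonneg_pos)
      then show "e / (2 * (norm y + 1)) * (norm y + 1) = e / 2" by (simp add: field_simps)
    qed
    finally show ?thesis using e by simp
  qed
  have "u - s *\<^sub>R y \<in> E" using uE y sub by (simp add: subspace_diff subspace_scale)
  moreover have "dist (u - s *\<^sub>R y) u < e" using sy s by (simp add: dist_norm)
  ultimately have 1: "u - s *\<^sub>R y \<in> K" using e by blast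
  have "u + s *\<^sub>R y \<in> E" using uE y sub by (simp add: subspace_add subspace_scale)
  moreover have "dist (u + s *\<^sub>R y) u < e" using sy s by (simp add: dist_norm)
  ultimately have 2: "u + s *\<^sub>R y \<in> K" using e by blast
  have hi0: "(1/s) *\<^sub>R u - y \<in> K"
  proof -
    have "(1/s) *\<^sub>R (u - s *\<^sub>R y) \<in> K" using 1 s by (simp add: K_scale)
    then show ?thesis using s by (simp add: scaleR_diff_right)
  qed
  have lo0: "y - (- 1/s) *\<^sub>R u \<in> K"
  proof -
    have "(1/s) *\<^sub>R (u + s *\<^sub>R y) \<in> K" using 2 s by (simp add: K_scale)
    then show ?thesis using s by (simp add: scaleR_add_right add.commute)
  qed
  have "\<forall>k. \<exists>a0 b0. (?T^^k) y - a0 *\<^sub>R u \<in> K \<and> b0 *\<^sub>R u - (?T^^k) y \<in> K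
           \<and> b0 - a0 \<le> ?d^k * (2/s)"
  proof
    fix k show "\<exists>a0 b0. (?T^^k) y - a0 *\<^sub>R u \<in> K \<and> b0 *\<^sub>R u - (?T^^k) y \<in> K
           \<and> b0 - a0 \<le> ?d^k * (2/s)"
    proof (induction k)
      case 0
      show ?case using lo0 hi0 by (intro exI[of _ "-1/s"] exI[of _ "1/s"]) simp
    next
      case (Suc k)
      then obtain a0 b0 where ab: "(?T^^k) y - a0 *\<^sub>R u \<in> K" "b0 *\<^sub>R u - (?T^^k) y \<in> K"
          "b0 - a0 \<le> ?d^k * (2/s)" by blast
      let ?y = "(?T^^k) y"
      note st = step[OF eps Tu r au ab(1,2)]
      have w0: "0 \<le> b0 - a0"
      proof -
        have "(b0 - a0) *\<^sub>R u = (b0 *\<^sub>R u - ?y) + (?y - a0 *\<^sub>R u)" by (simp add: scaleR_diff_left)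
        then have "(b0 - a0) *\<^sub>R u \<in> K" using K_add[OF ab(2) ab(1)] by simp
        then have "0 \<le> inner a ((b0 - a0) *\<^sub>R u)" using nn by blast
        then show ?thesis using au by simp
      qed
      define a1 where "a1 = a0 + (\<epsilon>/r) * (inner a ?y - a0)"
      define b1 where "b1 = b0 - (\<epsilon>/r) * (b0 - inner a ?y)"
      have "b1 - a1 = (b0 - a0) * (1 - \<epsilon>/r)" unfolding a1_def b1_def by (simp add: algebra_simps add_divide_distrib[symmetric])
      also have "\<dots> \<le> (b0 - a0) * ?d" using w0 by (intro mult_left_mono) auto
      also have "\<dots> \<le> (?d^k * (2/s)) * ?d" using ab(3) by (intro mult_right_mono) auto
      also have "\<dots> = ?d^(Suc k) * (2/s)" by (simp add: algebra_simps)
      finally have "b1 - a1 \<le> ?d^(Suc k) * (2/s)" .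
      moreover have "(?T^^Suc k) y = ?T ?y" by simp
      ultimately show ?case using st unfolding a1_def[symmetric] b1_def[symmetric]
        by (intro exI[of _ a1] exI[of _ b1]) simp
    qed
  qed
  then show ?thesis by blast
qed


lemma main:
  assumes B: "finite B" "E \<subseteq> span B" "B \<subseteq> E"
  shows "\<exists>v\<in>B. \<exists>k. (T^^k) v \<in> Ki \<or> - ((T^^k) v) \<in> Ki"
proof (rule ccontr)
  assume H: "\<not> (\<exists>v\<in>B. \<exists>k. (T^^k) v \<in> Ki \<or> - ((T^^k) v) \<in> Ki)"
  obtain a b where ab: "b > 0" "\<forall>x\<in>K. b * norm x \<le> inner a x" using phi_ex by blast
  have nn: "\<forall>x\<in>K. 0 \<le> inner a x"
  proof
    fix x assume "x \<in> K"
    then have "b * norm x \<le> inner a x" using ab by blast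
    moreover have "0 \<le> b * norm x" using ab by simp
    ultimately show "0 \<le> inner a x" by linarith
  qed
  obtain u r where u: "u \<in> Ki" "r > 0" "T u = r *\<^sub>R u" "inner a u = 1"
    using eigen[OF ab] by blast
  obtain \<epsilon> where \<epsilon>: "\<epsilon> > 0" "\<forall>z\<in>K. T z - (\<epsilon> * inner a z) *\<^sub>R u \<in> K"
    using uniform[OF ab u(1) u(4)] by blast
  let ?T = "\<lambda>x. (1/r) *\<^sub>R T x"
  let ?d = "max 0 (1 - \<epsilon>/r)"
  have linT': "linear ?T"
    by (rule linearI) (use lin in \<open>simp_all add: linear_add linear_cmul scaleR_add_right\<close>)
  have linTk: "linear (?T^^k)" for k
  proof (induction k)
    case 0 then show ?case by (simp add: linear_id[unfolded id_def])
  next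
    case (Suc k)
    then show ?case using linear_compose[OF Suc linT'] by (simp add: o_def)
  qed
  have Tk: "(?T^^k) v = ((1/r)^k) *\<^sub>R (T^^k) v" for k v
  proof (induction k)
    case 0 then show ?case by simp
  next
    case (Suc k)
    have "(?T^^Suc k) v = (1/r) *\<^sub>R T (((1/r)^k) *\<^sub>R (T^^k) v)" using Suc by simp
    also have "\<dots> = ((1/r)^Suc k) *\<^sub>R (T^^Suc k) v" using lin by (simp add: linear_cmul)
    finally show ?case .
  qed
  have Tku: "(?T^^k) u = u" for k
    by (induction k) (use u(2,3) in simp_all)
  have H': "(?T^^k) v \<notin> Ki \<and> - ((?T^^k) v) \<notin> Ki" if v: "v \<in> B" for v k
  proof -
    have rk: "r^k > 0" using u(2) by simp
    have e: "(T^^k) v = (r^k) *\<^sub>R (?T^^k) v" unfolding Tk using u(2) by (simp add: power_one_over)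
    show ?thesis
    proof (intro conjI notI)
      assume "(?T^^k) v \<in> Ki"
      then have "(T^^k) v \<in> Ki" unfolding e using rk by (rule Ki_scale[rotated])
      then show False using H v by blast
    next
      assume "- (?T^^k) v \<in> Ki"
      then have "(r^k) *\<^sub>R (- (?T^^k) v) \<in> Ki" using rk by (intro Ki_scale)
      then have "- ((T^^k) v) \<in> Ki" unfolding e by simp
      then show False using H v by blast
    qed
  qed
  have bnd: "\<exists>w. \<forall>k. \<bar>inner a ((?T^^k) v)\<bar> \<le> ?d^k * w" if v: "v \<in> B" for v
  proof -
    have vE: "v \<in> E" using v B by blast
    obtain w where w: "\<forall>k. \<exists>a0 b0. (?T^^k) v - a0 *\<^sub>R u \<in> K \<and> b0 *\<^sub>R u - (?T^^k) v \<in> K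
           \<and> b0 - a0 \<le> ?d^k * w"
      using iter[OF \<epsilon>(2) \<epsilon>(1) u(3) u(2) u(4) u(1) nn vE] by blast
    have "\<bar>inner a ((?T^^k) v)\<bar> \<le> ?d^k * w" for k
    proof -
      let ?y = "(?T^^k) v"
      obtain a0 b0 where ab0: "?y - a0 *\<^sub>R u \<in> K" "b0 *\<^sub>R u - ?y \<in> K" "b0 - a0 \<le> ?d^k * w"
        using w by blast
      have a0: "a0 \<le> 0"
      proof (rule ccontr)
        assume "\<not> a0 \<le> 0"
        then have "a0 *\<^sub>R u \<in> Ki" using u(1) by (intro Ki_scale) auto
        from Ki_add[OF this ab0(1)] have "?y \<in> Ki" by simp
        then show False using H' v by blast
      qed
      have b0: "0 \<le> b0"
      proof (rule ccontr)
        assume "\<not> 0 \<le> b0"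
        then have "(-b0) *\<^sub>R u \<in> Ki" using u(1) by (intro Ki_scale) auto
        from Ki_add[OF this ab0(2)] have "- ?y \<in> Ki" by simp
        then show False using H' v by blast
      qed
      have "0 \<le> inner a (?y - a0 *\<^sub>R u)" using nn ab0(1) by blast
      then have l: "a0 \<le> inner a ?y" using u(4) by (simp add: inner_diff_right)
      have "0 \<le> inner a (b0 *\<^sub>R u - ?y)" using nn ab0(2) by blast
      then have h: "inner a ?y \<le> b0" using u(4) by (simp add: inner_diff_right)
      have "\<bar>inner a ?y\<bar> \<le> b0 - a0" using l h a0 b0 by linarith
      then show ?thesis using ab0(3) by linarith
    qed
    then show ?thesis by blast
  qed
  then obtain W where W: "\<forall>v\<in>B. \<forall>k. \<bar>inner a ((?T^^k) v)\<bar> \<le> ?d^k * W v"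
    by metis
  have "u \<in> span B" using u(1) Ki_E B by blast
  then obtain c where c: "u = (\<Sum>v\<in>B. c v *\<^sub>R v)" using span_finite[OF B(1)] by blast
  define C where "C = (\<Sum>v\<in>B. \<bar>c v\<bar> * W v)"
  have d: "?d < 1" using \<epsilon>(1) u(2) by simp
  obtain k where k: "?d^k * C < 1"
  proof (cases "C \<le> 0")
    case True
    then show ?thesis using that[of 0] by simp
  next
    case False
    obtain k where "?d^k < 1/C" using real_arch_pow_inv[OF _ d, of "1/C"] False by auto
    then show ?thesis using that[of k] False by (simp add: pos_less_divide_eq)
  qed
  have "u = (?T^^k) u" using Tku by simp
  also have "\<dots> = (\<Sum>v\<in>B. c v *\<^sub>R (?T^^k) v)"
    unfolding c using linTk[of k] by (simp add: linear_sum linear_cmul)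
  finally have "inner a u = (\<Sum>v\<in>B. c v * inner a ((?T^^k) v))"
    by (metis (no_types, lifting) inner_scaleR_right inner_sum_right sum.cong)
  also have "\<dots> \<le> (\<Sum>v\<in>B. \<bar>c v\<bar> * (?d^k * W v))"
  proof (rule sum_mono)
    fix v assume v: "v \<in> B"
    have "c v * inner a ((?T^^k) v) \<le> \<bar>c v\<bar> * \<bar>inner a ((?T^^k) v)\<bar>"
      by (metis abs_ge_self abs_mult)
    also have "\<dots> \<le> \<bar>c v\<bar> * (?d^k * W v)" using W v by (intro mult_left_mono) auto
    finally show "c v * inner a ((?T^^k) v) \<le> \<bar>c v\<bar> * (?d^k * W v)" .
  qed
  also have "\<dots> = ?d^k * C" unfolding C_def sum_distrib_left by (simp add: ac_simps)
  finally show False using k u(4) by simp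
qed

end


lemma ext_space_subspace: "subspace (ext_space j :: (real^('n::{finite,linorder} set)) set)"
  unfolding subspace_def ext_space_def by auto

lemma ext_op_linear: "linear (ext_op j A)"
proof (rule linearI)
  fix x y show "ext_op j A (x + y) = ext_op j A x + ext_op j A y"
    unfolding ext_op_def by (simp add: vec_eq_iff distrib_left sum.distrib)
next
  fix c x show "ext_op j A (c *\<^sub>R x) = c *\<^sub>R ext_op j A x"
    unfolding ext_op_def by (simp add: vec_eq_iff sum_distrib_left ac_simps)
qed

lemma wedge_ext:
  fixes A :: "real^('n::{finite,linorder})^('n::{finite,linorder})"
  shows "ext_op j A (wedge j x) = wedge j (\<lambda>m. A *v x m)"
proof -
  have "ext_op j A (wedge j x) $ I = wedge j (\<lambda>m. A *v x m) $ I" for I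
  proof (cases "card I = j")
    case False then show ?thesis unfolding ext_op_def wedge_def by simp
  next
    case True
    let ?sI = "sorted_list_of_set I"
    have "wedge j (\<lambda>m. A *v x m) $ I = detj j (\<lambda>r k. \<Sum>i\<in>UNIV. A $ (?sI ! r) $ i * x k $ i)"
      unfolding wedge_def using True by (simp only: vec_lambda_beta simp_thms if_True matrix_vector_mult_def)
    also have "\<dots> = (\<Sum>J | card J = j. detj j (\<lambda>r s. A $ (?sI ! r) $ (sorted_list_of_set J ! s))
          * detj j (\<lambda>r k. x k $ (sorted_list_of_set J ! r)))"
      by (rule cauchy_binet[where B = "\<lambda>r i. A $ (?sI ! r) $ i" and X = "\<lambda>i k. x k $ i"])
    also have "\<dots> = (\<Sum>J | card J = j. detj j (\<lambda>r s. A $ (?sI ! r) $ (sorted_list_of_set J ! s))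
          * (if card J = j then detj j (\<lambda>r k. x k $ (sorted_list_of_set J ! r)) else 0))"
      by (rule sum.cong[OF refl]) (simp only: mem_Collect_eq simp_thms if_True)
    also have "\<dots> = ext_op j A (wedge j x) $ I"
    proof -
      have e: "wedge j x $ J = (if card J = j then detj j (\<lambda>r k. x k $ (sorted_list_of_set J ! r)) else 0)" for J
        unfolding wedge_def by (simp only: vec_lambda_beta)
      have "ext_op j A (wedge j x) $ I = (\<Sum>J | card J = j. detj j (\<lambda>r s. A $ (?sI ! r) $ (sorted_list_of_set J ! s))
          * wedge j x $ J)"
        unfolding ext_op_def using True by (simp only: vec_lambda_beta simp_thms if_True)
      then show ?thesis unfolding e by simp
    qed
    finally show ?thesis by simp
  qed
  then show ?thesis by (simp add: vec_eq_iff)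
qed

lemma wedge_pow:
  fixes A :: "real^('n::{finite,linorder})^('n::{finite,linorder})"
  shows "(ext_op j A ^^ k) (wedge j x) = wedge j (\<lambda>m. ((\<lambda>v. A *v v)^^k) (x m))"
  by (induction k) (simp_all add: wedge_ext)

lemma wedge_neg:
  assumes "0 < j"
  shows "- wedge j x = wedge j (x(0 := - x 0))"
proof -
  have "detj j (\<lambda>r k. (x(0 := - x 0)) k $ (sorted_list_of_set I ! r))
      = detj j (\<lambda>r k. if k = 0 then - (x k $ (sorted_list_of_set I ! r)) else x k $ (sorted_list_of_set I ! r))" for I
    by (rule detj_cong) auto
  then show ?thesis unfolding wedge_def using detj_neg0[OF assms] by (simp add: vec_eq_iff)
qed

definition eI :: "'n set \<Rightarrow> real^('n::{finite,linorder} set)" where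
  "eI I = (\<chi> J. if J = I then 1 else 0)"

lemma eI_wedge:
  fixes I :: "'n::{finite,linorder} set"
  assumes I: "card I = j"
  shows "eI I = wedge j (\<lambda>m. axis (sorted_list_of_set I ! m) 1)"
proof -
  let ?sI = "sorted_list_of_set I"
  note sfI = sorted_facts[OF I] sorted_facts2[OF I]
  have "eI I $ J = wedge j (\<lambda>m. axis (?sI ! m) 1) $ J" for J
  proof (cases "card J = j")
    case False
    then have "J \<noteq> I" using I by auto
    then show ?thesis using False unfolding eI_def wedge_def by simp
  next
    case True
    let ?sJ = "sorted_list_of_set J"
    note sfJ = sorted_facts[OF True] sorted_facts2[OF True]
    have w: "wedge j (\<lambda>m. axis (?sI ! m) 1) $ J = detj j (\<lambda>r k. if ?sJ ! r = ?sI ! k then 1 else 0)"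
      unfolding wedge_def using True by (simp add: axis_def)
    show ?thesis
    proof (cases "J = I")
      case True
      have "detj j (\<lambda>r k. if ?sJ ! r = ?sI ! k then 1 else 0) = detj j (\<lambda>r k. if r = k then 1 else 0)"
        by (rule detj_cong) (use sfI True in \<open>auto simp: nth_eq_iff_index_eq\<close>)
      then show ?thesis using w True detj_id unfolding eI_def by simp
    next
      case False
      have "\<not> I \<subseteq> J"
      proof
        assume "I \<subseteq> J"
        then have "I = J" using I \<open>card J = j\<close> by (intro card_subset_eq) auto
        then show False using False by simp
      qed
      then obtain i where i: "i \<in> I" "i \<notin> J" by blast
      then obtain k where k: "k < j" "?sI ! k = i" using sfI(5) by force
      have "detj j (\<lambda>r k. if ?sJ ! r = ?sI ! k then 1 else 0) = 0"
      proof (rule detj_zero_col[OF k(1)])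
        fix r assume "r < j"
        then have "?sJ ! r \<in> J" using sfJ(5) by blast
        then show "(if ?sJ ! r = ?sI ! k then 1 else 0) = (0::real)" using k i by auto
      qed
      then show ?thesis using w False unfolding eI_def by simp
    qed
  qed
  then show ?thesis by (simp add: vec_eq_iff)
qed

lemma eI_span:
  fixes w :: "real^('n::{finite,linorder} set)"
  assumes "w \<in> ext_space j"
  shows "w \<in> span (eI ` {I. card I = j})"
proof -
  have "w = (\<Sum>I\<in>{I. card I = j}. w $ I *\<^sub>R eI I)"
  proof -
    have f1: "w $ J = (\<Sum>I\<in>{I. card I = j}. w $ I * (if J = I then 1 else 0))" for J
    proof (cases "card J = j")
      case True
      have "(\<Sum>I\<in>{I. card I = j}. w $ I * (if J = I then 1 else 0)) = (\<Sum>I\<in>{I. card I = j}. if J = I then w $ I else 0)"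
        by (rule sum.cong[OF refl]) simp
      also have "\<dots> = (if J \<in> {I. card I = j} then w $ J else 0)"
        by (rule sum.delta') simp
      also have "\<dots> = w $ J" using True by simp
      finally show ?thesis by simp
    next
      case False
      then have "w $ J = 0" using assms unfolding ext_space_def by blast
      moreover have "(\<Sum>I\<in>{I. card I = j}. w $ I * (if J = I then 1 else 0)) = 0"
      proof (rule sum.neutral, rule ballI)
        fix I :: "'n set" assume "I \<in> {I. card I = j}"
        then have "J \<noteq> I" using False by auto
        then show "w $ I * (if J = I then 1 else 0) = 0" by simp
      qed
      ultimately show ?thesis by simp
    qed
    have f2: "(\<Sum>I\<in>{I. card I = j}. w $ I *\<^sub>R eI I) $ J = (\<Sum>I\<in>{I. card I = j}. w $ I * (if J = I then 1 else 0))" for J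
      unfolding sum_component by (rule sum.cong[OF refl]) (simp add: eI_def)
    show ?thesis
    proof (rule vec_eq_iff[THEN iffD2], rule allI)
      fix J show "w $ J = (\<Sum>I\<in>{I. card I = j}. w $ I *\<^sub>R eI I) $ J"
        unfolding f2 by (rule f1)
    qed
  qed
  also have "\<dots> \<in> span (eI ` {I. card I = j})"
  proof (rule span_sum)
    fix I :: "'n set" assume "I \<in> {I. card I = j}"
    then have "eI I \<in> eI ` {I. card I = j}" by (rule imageI)
    then show "w $ I *\<^sub>R eI I \<in> span (eI ` {I. card I = j})" by (intro span_scale span_base)
  qed
  finally show ?thesis .
qed

lemma eI_space: "card I = j \<Longrightarrow> eI I \<in> ext_space j"
  unfolding ext_space_def eI_def by auto

lemma eI_nonzero: "eI I \<noteq> 0"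
proof
  assume "eI I = 0"
  then have "eI I $ I = 0" by simp
  moreover have "eI I $ I = 1" by (simp add: eI_def)
  ultimately show False by simp
qed


theorem corollary23:
  fixes K :: "nat \<Rightarrow> (real^('n::{finite,linorder} set)) set"
  assumes "STP_structure K"
  shows "\<forall>j\<in>{2..CARD('n)}. \<exists>w. w \<noteq> 0 \<and> w \<in> ext_interior j (K j) \<and> w \<in> simple_vecs j"
proof
  fix j assume j: "j \<in> {2..CARD('n)}"
  obtain A where G: "GSTP K A" and TP: "TP_structure K"
    using assms unfolding STP_structure_def by blast
  have j1: "j \<in> {1..CARD('n)}" using j by auto
  have pc: "proper_cone j (K j)" using TP j1 unfolding TP_structure_def by blast
  have pos: "ext_op j A ` (K j - {0}) \<subseteq> ext_interior j (K j)" using G j1 unfolding GSTP_def by blast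
  have "j \<le> card (UNIV::'n set)" using j by simp
  then obtain I0 :: "'n set" where I0: "card I0 = j"
    using obtain_subset_with_card_n[of j "UNIV::'n set"] by metis
  let ?E = "ext_space j :: (real^('n set)) set"
  let ?Ki = "top_of_set ?E interior_of K j"
  have pcK: "pcone ?E (K j) (ext_op j A)"
  proof (rule pcone.intro)
    show "subspace ?E" by (rule ext_space_subspace)
    show "K j \<subseteq> ?E" using pc unfolding proper_cone_def by blast
    show "convex (K j)" using pc unfolding proper_cone_def by blast
    show "cone (K j)" using pc unfolding proper_cone_def by blast
    show "closed (K j)" using pc unfolding proper_cone_def by blast
    show "K j \<inter> uminus ` K j = {0}" using pc unfolding proper_cone_def by blast
    show "\<exists>v\<in>?E. v \<noteq> 0" using eI_space[OF I0] eI_nonzero by blast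
    show "linear (ext_op j A)" by (rule ext_op_linear)
    show "\<forall>x\<in>K j - {0}. ext_op j A x \<in> ?Ki" using pos unfolding ext_interior_def by blast
    show "?Ki \<noteq> {}" using pc unfolding proper_cone_def ext_interior_def by blast
  qed
  have fB: "finite (eI ` {I::'n set. card I = j})" by simp
  have sB: "?E \<subseteq> span (eI ` {I::'n set. card I = j})" using eI_span by blast
  have BE: "eI ` {I::'n set. card I = j} \<subseteq> ?E" using eI_space by blast
  obtain v k where v: "v \<in> eI ` {I::'n set. card I = j}"
      "(ext_op j A ^^ k) v \<in> ?Ki \<or> - ((ext_op j A ^^ k) v) \<in> ?Ki"
    using pcone.main[OF pcK fB sB BE] by blast
  then obtain I :: "'n set" where I: "card I = j" "v = eI I" by blast
  define x where "x = (\<lambda>m. ((\<lambda>u. A *v u)^^k) (axis (sorted_list_of_set I ! m) 1))"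
  have tv: "(ext_op j A ^^ k) v = wedge j x"
    unfolding I(2) eI_wedge[OF I(1)] wedge_pow x_def ..
  have j0: "0 < j" using j by auto
  show "\<exists>w. w \<noteq> 0 \<and> w \<in> ext_interior j (K j) \<and> w \<in> simple_vecs j"
  proof (cases "wedge j x \<in> ?Ki")
    case True
    then have "wedge j x \<noteq> 0" using pcone.zero_notKi[OF pcK] by auto
    then show ?thesis using True unfolding ext_interior_def simple_vecs_def by blast
  next
    case False
    then have m: "- wedge j x \<in> ?Ki" using v(2) tv by simp
    have e: "- wedge j x = wedge j (x(0 := - x 0))" by (rule wedge_neg[OF j0])
    have "wedge j (x(0 := - x 0)) \<noteq> 0" using pcone.zero_notKi[OF pcK] m e by auto
    then show ?thesis using m e unfolding ext_interior_def simple_vecs_def by auto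
  qed
qed

end
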